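(* Let $\mathcal S$ and $\mathcal A$ be finite sets, $P(\cdot\mid s,a)$ a transition kernel on $\mathcal S$, $r:\mathcal S\times\mathcal A\times\mathcal S\to\mathbb R$ a reward function, $\gamma\in[0,1)$, and $\beta>0$. Let $Q^*$ be the unique fixed point of the Bellman operator $(TQ)(s,a)=R(s,a)+\gamma\sum_{s'}P(s'\mid s,a)\max_{a'\in\mathcal A}Q(s',a')$, where $R(s,a)=\sum_{s'}P(s'\mid s,a)r(s,a,s')$. For $Q_1,Q_2:\mathcal S\times\mathcal A\to\mathbb R$ define $$L_1=\mathbb E_{(s,a)\sim U(\mathcal S\times\mathcal A),\,s'\sim P(\cdot\mid s,a)}\Big[\big(r(s,a,s')+\gamma\max_{a'}Q_2(s',a')-Q_1(s,a)\big)^2+\tfrac{\beta}{2}\big(Q_2(s,a)-Q_1(s,a)\big)^2\Big],$$ $$L_2=\mathbb E_{(s,a)\sim U(\mathcal S\times\mathcal A),\,s'\sim P(\cdot\mid s,a)}\Big[\big(r(s,a,s')+\gamma\max_{a'}Q_1(s',a')-Q_2(s,a)\big)^2+\tfrac{\beta}{2}\big(Q_1(s,a)-Q_2(s,a)\big)^2\Big],$$ where $U(\mathcal S\times\mathcal A)$ is the uniform distribution. If $\varepsilon>0$ and $L_1\le\varepsilon$, $L_2\le\varepsilon$, then for $i\in\{1,2\}$ $$\|Q_i-Q^*\|_\infty\le\frac{\sqrt{\varepsilon|\mathcal S||\mathcal A|}}{1-\gamma}+\frac{\gamma}{1-\gamma}\sqrt{\frac{2\varepsilon|\mathcal S||\mathcal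 A|}{\beta}}.$$
   Context: $Q_1,Q_2$ play the roles of the online and target Q-functions of the "symmetric gradient target tracking" method (SGT2-DQN); they are arbitrary real-valued functions on $\mathcal S\times\mathcal A$. $\|\cdot\|_\infty$ is the maximum over $\mathcal S\times\mathcal A$. *)

theory Defs
  imports "HOL-Analysis.Analysis"
begin

definition transition_kernel :: "('s::finite \<Rightarrow> 'act::finite \<Rightarrow> 's \<Rightarrow> real) \<Rightarrow> bool" where
  "transition_kernel P \<longleftrightarrow> (\<forall>s a s'. P s a s' \<ge> 0) \<and> (\<forall>s a. (\<Sum>s'\<in>UNIV. P s a s') = 1)"

definition maxQ :: "('s \<Rightarrow> 'act::finite \<Rightarrow> real) \<Rightarrow> 's \<Rightarrow> real" where
  "maxQ Q s = Max (range (\<lambda>a. Q s a))"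

definition exp_reward :: "('s::finite \<Rightarrow> 'act \<Rightarrow> 's \<Rightarrow> real) \<Rightarrow> ('s \<Rightarrow> 'act \<Rightarrow> 's \<Rightarrow> real) \<Rightarrow> 's \<Rightarrow> 'act \<Rightarrow> real" where
  "exp_reward P r s a = (\<Sum>s'\<in>UNIV. P s a s' * r s a s')"

definition bellman :: "('s::finite \<Rightarrow> 'act::finite \<Rightarrow> 's \<Rightarrow> real) \<Rightarrow> ('s \<Rightarrow> 'act \<Rightarrow> 's \<Rightarrow> real) \<Rightarrow> real
    \<Rightarrow> ('s \<Rightarrow> 'act \<Rightarrow> real) \<Rightarrow> ('s \<Rightarrow> 'act \<Rightarrow> real)" where
  "bellman P r \<gamma> Q = (\<lambda>s a. exp_reward P r s a + \<gamma> * (\<Sum>s'\<in>UNIV. P s a s' * maxQ Q s'))"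

definition supnorm :: "('s::finite \<Rightarrow> 'act::finite \<Rightarrow> real) \<Rightarrow> real" where
  "supnorm Q = Max (range (\<lambda>(s,a). \<bar>Q s a\<bar>))"

definition expect_sas :: "('s::finite \<Rightarrow> 'act::finite \<Rightarrow> 's \<Rightarrow> real) \<Rightarrow> ('s \<Rightarrow> 'act \<Rightarrow> 's \<Rightarrow> real) \<Rightarrow> real" where
  "expect_sas P f = (\<Sum>s\<in>UNIV. \<Sum>a\<in>UNIV. (1 / (real CARD('s) * real CARD('act))) *
      (\<Sum>s'\<in>UNIV. P s a s' * f s a s'))"

text \<open>The SGT2 loss for the first network, Q1 online, Q2 target; L2 = sgt2_loss .. Q2 Q1.\<close>
definition sgt2_loss :: "('s::finite \<Rightarrow> 'act::finite \<Rightarrow> 's \<Rightarrow> real) \<Rightarrow> ('s \<Rightarrow> 'act \<Rightarrow> 's \<Rightarrow> real) \<Rightarrow> real \<Rightarrow> real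
    \<Rightarrow> ('s \<Rightarrow> 'act \<Rightarrow> real) \<Rightarrow> ('s \<Rightarrow> 'act \<Rightarrow> real) \<Rightarrow> real" where
  "sgt2_loss P r \<gamma> \<beta> Q1 Q2 = expect_sas P (\<lambda>s a s'.
      (r s a s' + \<gamma> * maxQ Q2 s' - Q1 s a)^2 + (\<beta> / 2) * (Q2 s a - Q1 s a)^2)"

end

theory Submission
  imports Defs
begin

lemma maxQ_ge: "Q s a \<le> maxQ (Q :: 's \<Rightarrow> 'act::finite \<Rightarrow> real) s"
  unfolding maxQ_def by (rule Max_ge) auto

lemma maxQ_ex: "\<exists>a. maxQ (Q :: 's \<Rightarrow> 'act::finite \<Rightarrow> real) s = Q s a"
proof -
  have "Max (range (\<lambda>a. Q s a)) \<in> range (\<lambda>a. Q s a)" by (rule Max_in) auto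
  then obtain a where "Max (range (\<lambda>a. Q s a)) = Q s a" by blast
  then show ?thesis unfolding maxQ_def by blast
qed

lemma maxQ_lip:
  fixes Q Q' :: "'s \<Rightarrow> 'act::finite \<Rightarrow> real"
  assumes "\<And>a. \<bar>Q s a - Q' s a\<bar> \<le> d"
  shows "\<bar>maxQ Q s - maxQ Q' s\<bar> \<le> d"
proof -
  obtain a where a: "maxQ Q s = Q s a" using maxQ_ex[of Q s] by blast
  obtain b where b: "maxQ Q' s = Q' s b" using maxQ_ex[of Q' s] by blast
  have "Q s a \<le> Q' s a + d" using assms[of a] by auto
  also have "\<dots> \<le> maxQ Q' s + d" using maxQ_ge[of Q' s a] by auto
  finally have 1: "maxQ Q s \<le> maxQ Q' s + d" using a by simp
  have "Q' s b \<le> Q s b + d" using assms[of b] by auto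
  also have "\<dots> \<le> maxQ Q s + d" using maxQ_ge[of Q s b] by auto
  finally have 2: "maxQ Q' s \<le> maxQ Q s + d" using b by simp
  from 1 2 show ?thesis by linarith
qed

lemma supnorm_ge: "\<bar>Q s a\<bar> \<le> supnorm (Q :: 's::finite \<Rightarrow> 'act::finite \<Rightarrow> real)"
  unfolding supnorm_def by (rule Max_ge) (auto intro: image_eqI[where x="(s,a)"])

lemma supnorm_le:
  assumes "\<And>s a. \<bar>Q s a\<bar> \<le> c"
  shows "supnorm (Q :: 's::finite \<Rightarrow> 'act::finite \<Rightarrow> real) \<le> c"
  unfolding supnorm_def using assms by (subst Max_le_iff) auto

lemma bellman_lip:
  fixes P :: "'s::finite \<Rightarrow> 'act::finite \<Rightarrow> 's \<Rightarrow> real"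
  assumes P: "transition_kernel P" and g: "0 \<le> \<gamma>"
  shows "\<bar>bellman P r \<gamma> Q s a - bellman P r \<gamma> Q' s a\<bar> \<le> \<gamma> * supnorm (\<lambda>s a. Q s a - Q' s a)"
proof -
  let ?d = "supnorm (\<lambda>s a. Q s a - Q' s a)"
  have m: "\<bar>maxQ Q s' - maxQ Q' s'\<bar> \<le> ?d" for s'
    by (rule maxQ_lip) (rule supnorm_ge[where Q="\<lambda>s a. Q s a - Q' s a", simplified])
  have "bellman P r \<gamma> Q s a - bellman P r \<gamma> Q' s a
      = \<gamma> * (\<Sum>s'\<in>UNIV. P s a s' * (maxQ Q s' - maxQ Q' s'))"
    unfolding bellman_def by (simp add: algebra_simps sum_subtractf)
  then have "\<bar>bellman P r \<gamma> Q s a - bellman P r \<gamma> Q' s a\<bar>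
      = \<gamma> * \<bar>\<Sum>s'\<in>UNIV. P s a s' * (maxQ Q s' - maxQ Q' s')\<bar>"
    using g by (simp add: abs_mult)
  also have "\<bar>\<Sum>s'\<in>UNIV. P s a s' * (maxQ Q s' - maxQ Q' s')\<bar> \<le> (\<Sum>s'\<in>UNIV. P s a s' * ?d)"
  proof -
    have "\<bar>\<Sum>s'\<in>UNIV. P s a s' * (maxQ Q s' - maxQ Q' s')\<bar> \<le> (\<Sum>s'\<in>UNIV. \<bar>P s a s' * (maxQ Q s' - maxQ Q' s')\<bar>)"
      by (rule sum_abs)
    also have "\<dots> \<le> (\<Sum>s'\<in>UNIV. P s a s' * ?d)"
    proof (rule sum_mono)
      fix s' :: 's
      have "P s a s' \<ge> 0" using P unfolding transition_kernel_def by auto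
      then show "\<bar>P s a s' * (maxQ Q s' - maxQ Q' s')\<bar> \<le> P s a s' * ?d"
        using m[of s'] by (simp add: abs_mult mult_left_mono)
    qed
    finally show ?thesis .
  qed
  also have "(\<Sum>s'\<in>UNIV. P s a s' * ?d) = ?d"
    using P unfolding transition_kernel_def by (simp add: sum_distrib_right[symmetric])
  finally show ?thesis using g by (simp add: mult_left_mono)
qed

lemma jensen:
  fixes p g :: "'s::finite \<Rightarrow> real"
  assumes "\<And>x. p x \<ge> 0" and "(\<Sum>x\<in>UNIV. p x) = 1"
  shows "(\<Sum>x\<in>UNIV. p x * g x)^2 \<le> (\<Sum>x\<in>UNIV. p x * (g x)^2)"
proof -
  define m where "m = (\<Sum>x\<in>UNIV. p x * g x)"
  have "0 \<le> (\<Sum>x\<in>UNIV. p x * (g x - m)^2)"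
    using assms by (intro sum_nonneg) auto
  also have "\<dots> = (\<Sum>x\<in>UNIV. p x * (g x)^2) - 2 * m * (\<Sum>x\<in>UNIV. p x * g x) + m^2 * (\<Sum>x\<in>UNIV. p x)"
    by (simp add: power2_diff algebra_simps sum.distrib sum_subtractf sum_distrib_left sum_distrib_right)
  finally show ?thesis using assms(2) unfolding m_def by (simp add: power2_eq_square)
qed

lemma loss_bounds:
  fixes P :: "'s::finite \<Rightarrow> 'act::finite \<Rightarrow> 's \<Rightarrow> real"
  assumes P: "transition_kernel P" and b: "\<beta> > 0"
    and L: "sgt2_loss P r \<gamma> \<beta> Qa Qb \<le> \<epsilon>"
  shows "\<bar>bellman P r \<gamma> Qb s a - Qa s a\<bar> \<le> sqrt (\<epsilon> * real CARD('s) * real CARD('act))"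
    and "\<bar>Qb s a - Qa s a\<bar> \<le> sqrt (2 * \<epsilon> * real CARD('s) * real CARD('act) / \<beta>)"
proof -
  define N where "N = real CARD('s) * real CARD('act)"
  have N: "N > 0" unfolding N_def by simp
  define g where "g = (\<lambda>s'. r s a s' + \<gamma> * maxQ Qb s' - Qa s a)"
  define h where "h = (\<beta> / 2) * (Qb s a - Qa s a)^2"
  have Pn: "\<And>s a s'. P s a s' \<ge> 0" and P1: "\<And>s a. (\<Sum>s'\<in>UNIV. P s a s') = 1"
    using P unfolding transition_kernel_def by auto
  define F where "F = (\<lambda>s a. (1 / N) * (\<Sum>s'\<in>UNIV. P s a s' *
      ((r s a s' + \<gamma> * maxQ Qb s' - Qa s a)^2 + (\<beta> / 2) * (Qb s a - Qa s a)^2)))"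
  have Fnn: "F s' a' \<ge> 0" for s' a'
    unfolding F_def using N Pn b by (intro mult_nonneg_nonneg sum_nonneg) auto
  have "F s a \<le> (\<Sum>a'\<in>UNIV. F s a')"
    by (rule member_le_sum) (auto simp: Fnn)
  also have "\<dots> \<le> (\<Sum>s'\<in>UNIV. \<Sum>a'\<in>UNIV. F s' a')"
    by (rule member_le_sum[where f="\<lambda>s'. \<Sum>a'\<in>UNIV. F s' a'"]) (auto intro: sum_nonneg Fnn)
  also have "\<dots> = sgt2_loss P r \<gamma> \<beta> Qa Qb"
    unfolding sgt2_loss_def expect_sas_def F_def N_def by simp
  finally have "F s a \<le> \<epsilon>" using L by simp
  moreover have "F s a = (1/N) * ((\<Sum>s'\<in>UNIV. P s a s' * (g s')^2) + h)"
  proof -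
    have "(\<Sum>s'\<in>UNIV. P s a s' * ((g s')^2 + h)) = (\<Sum>s'\<in>UNIV. P s a s' * (g s')^2) + h * (\<Sum>s'\<in>UNIV. P s a s')"
      by (simp add: algebra_simps sum.distrib sum_distrib_left)
    then show ?thesis unfolding F_def g_def h_def using P1 by simp
  qed
  ultimately have main: "(\<Sum>s'\<in>UNIV. P s a s' * (g s')^2) + h \<le> \<epsilon> * N"
    using N by (simp add: field_simps)
  have hnn: "h \<ge> 0" unfolding h_def using b by simp
  have gnn: "(\<Sum>s'\<in>UNIV. P s a s' * (g s')^2) \<ge> 0" using Pn by (intro sum_nonneg) auto
  have "(\<Sum>s'\<in>UNIV. P s a s' * g s')^2 \<le> (\<Sum>s'\<in>UNIV. P s a s' * (g s')^2)"
    by (rule jensen) (auto simp: Pn P1)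
  moreover have "(\<Sum>s'\<in>UNIV. P s a s' * g s') = bellman P r \<gamma> Qb s a - Qa s a"
  proof -
    have "(\<Sum>s'\<in>UNIV. P s a s' * g s') = (\<Sum>s'\<in>UNIV. P s a s' * r s a s') + \<gamma> * (\<Sum>s'\<in>UNIV. P s a s' * maxQ Qb s') - Qa s a * (\<Sum>s'\<in>UNIV. P s a s')"
      unfolding g_def by (simp add: algebra_simps sum.distrib sum_subtractf sum_distrib_left sum_distrib_right)
    then show ?thesis using P1 unfolding bellman_def exp_reward_def by simp
  qed
  ultimately have "(bellman P r \<gamma> Qb s a - Qa s a)^2 \<le> \<epsilon> * N" using main hnn by simp
  then show "\<bar>bellman P r \<gamma> Qb s a - Qa s a\<bar> \<le> sqrt (\<epsilon> * real CARD('s) * real CARD('act))"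
    unfolding N_def by (metis mult.assoc real_le_rsqrt real_sqrt_abs real_sqrt_le_mono abs_ge_zero real_sqrt_ge_zero)
  have "(\<beta> / 2) * (Qb s a - Qa s a)^2 \<le> \<epsilon> * N" using main gnn unfolding h_def by simp
  then have "(Qb s a - Qa s a)^2 \<le> 2 * \<epsilon> * N / \<beta>" using b by (simp add: field_simps)
  then show "\<bar>Qb s a - Qa s a\<bar> \<le> sqrt (2 * \<epsilon> * real CARD('s) * real CARD('act) / \<beta>)"
    unfolding N_def by (metis mult.assoc real_sqrt_abs real_sqrt_le_mono)
qed

lemma one_side:
  fixes P :: "'s::finite \<Rightarrow> 'act::finite \<Rightarrow> 's \<Rightarrow> real"
  assumes P: "transition_kernel P"
    and g0: "0 \<le> \<gamma>" and g1: "\<gamma> < 1" and b: "\<beta> > 0"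
    and fp: "bellman P r \<gamma> Qstar = Qstar"
    and L: "sgt2_loss P r \<gamma> \<beta> Qa Qb \<le> \<epsilon>"
  shows "supnorm (\<lambda>s a. Qa s a - Qstar s a) \<le>
      sqrt (\<epsilon> * real CARD('s) * real CARD('act)) / (1 - \<gamma>)
      + \<gamma> / (1 - \<gamma>) * sqrt (2 * \<epsilon> * real CARD('s) * real CARD('act) / \<beta>)"
proof -
  define e where "e = sqrt (\<epsilon> * real CARD('s) * real CARD('act))"
  define d where "d = sqrt (2 * \<epsilon> * real CARD('s) * real CARD('act) / \<beta>)"
  define M where "M = supnorm (\<lambda>s a. Qa s a - Qstar s a)"
  have dd: "supnorm (\<lambda>s a. Qb s a - Qa s a) \<le> d"
    unfolding d_def by (rule supnorm_le) (rule loss_bounds(2)[OF P b L])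
  have pt: "\<bar>Qa s a - Qstar s a\<bar> \<le> e + \<gamma> * d + \<gamma> * M" for s a
  proof -
    have 1: "\<bar>bellman P r \<gamma> Qb s a - Qa s a\<bar> \<le> e" unfolding e_def by (rule loss_bounds(1)[OF P b L])
    have 2: "\<bar>bellman P r \<gamma> Qb s a - bellman P r \<gamma> Qa s a\<bar> \<le> \<gamma> * d"
      using bellman_lip[OF P g0, of r Qb s a Qa] mult_left_mono[OF dd g0] by linarith
    have 3: "\<bar>bellman P r \<gamma> Qa s a - bellman P r \<gamma> Qstar s a\<bar> \<le> \<gamma> * M"
      using bellman_lip[OF P g0, of r Qa s a Qstar] unfolding M_def by simp
    have "Qstar s a = bellman P r \<gamma> Qstar s a" using fp by simp
    then show ?thesis using 1 2 3 by linarith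
  qed
  have "M \<le> e + \<gamma> * d + \<gamma> * M" unfolding M_def by (rule supnorm_le) (use pt M_def in simp)
  then have "M * (1 - \<gamma>) \<le> e + \<gamma> * d" by (simp add: algebra_simps)
  then have "M \<le> (e + \<gamma> * d) / (1 - \<gamma>)" using g1 by (simp add: field_simps)
  then show ?thesis unfolding M_def e_def d_def by (simp add: add_divide_distrib)
qed

theorem theorem2:
  fixes P :: "'s::finite \<Rightarrow> 'act::finite \<Rightarrow> 's \<Rightarrow> real"
    and r :: "'s \<Rightarrow> 'act \<Rightarrow> 's \<Rightarrow> real"
    and \<gamma> \<beta> \<epsilon> :: real
    and Qstar Q1 Q2 :: "'s \<Rightarrow> 'act \<Rightarrow> real"
  assumes "transition_kernel P"
    and "0 \<le> \<gamma>" and "\<gamma> < 1" and "\<beta> > 0"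
    and "bellman P r \<gamma> Qstar = Qstar"
    and "\<epsilon> > 0"
    and "sgt2_loss P r \<gamma> \<beta> Q1 Q2 \<le> \<epsilon>"
    and "sgt2_loss P r \<gamma> \<beta> Q2 Q1 \<le> \<epsilon>"
  shows "\<forall>Q \<in> {Q1, Q2}. supnorm (\<lambda>s a. Q s a - Qstar s a) \<le>
      sqrt (\<epsilon> * real CARD('s) * real CARD('act)) / (1 - \<gamma>)
      + \<gamma> / (1 - \<gamma>) * sqrt (2 * \<epsilon> * real CARD('s) * real CARD('act) / \<beta>)"
  using one_side[OF assms(1-5) assms(7)] one_side[OF assms(1-5) assms(8)] by auto

end
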